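(* (Weak progress for $\lambda_{\mathrm{ch}}$ configurations.) Let $\cdot ; \cdot \vdash \mathcal{C}$, suppose $\mathcal{C}$ cannot reduce (there is no $\mathcal{C}'$ with $\mathcal{C} \longrightarrow \mathcal{C}'$), and let $\mathcal{C}' = (\nu a_1) \ldots (\nu a_n)(M_1 \parallel \ldots \parallel M_m \parallel a_1(\vec V_1) \parallel \ldots \parallel a_n(\vec V_n))$ be a canonical form of $\mathcal{C}$. Then every leaf of $\mathcal{C}$ is either: (1) a buffer $a_i(\vec V_i)$; (2) a fully-reduced term of the form $\mathbf{return}\ V$; or (3) a term of the form $E[\mathbf{take}\ a_i]$ where $\vec V_i = \epsilon$.
   Context: The calculus $\lambda_{\mathrm{ch}}$. Types $A,B ::= \mathbf{1} \mid A \to B \mid \mathsf{Chan}(A)$; $\alpha$ ranges over variables $x$ and names $a$; values $V,W ::= \alpha \mid \lambda x.M \mid ()$; computations $M,N ::= V\,W \mid \mathbf{let}\ x \Leftarrow M\ \mathbf{in}\ N \mid \mathbf{return}\ V \mid \mathbf{fork}\ M \mid \mathbf{give}\ V\ W \mid \mathbf{take}\ V \mid \mathbf{newCh}$. Value typing: $\Gamma\vdash\alpha:A$ if $\alpha:A\in\Gamma$; $\Gamma\vdash\lambda x.M:A\to B$ if $\Gamma,x:A\vdash M:B$; $\Gamma\vdash():\mathbf 1$. Computation typing: $V\,W : B$ if $V:A\to B$, $W:A$; $\mathbf{let}\ x \Leftarrow M\ \mathbf{in}\ N : B$ if $\Gamma\vdash M:A$, $\Gamma,x:A\vdash N:B$;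 $\mathbf{return}\ V : A$ if $V:A$; $\mathbf{give}\ V\ W : \mathbf{1}$ if $V:A$, $W:\mathsf{Chan}(A)$; $\mathbf{take}\ V : A$ if $V:\mathsf{Chan}(A)$; $\mathbf{fork}\ M : \mathbf{1}$ if $M:\mathbf 1$; $\mathbf{newCh} : \mathsf{Chan}(A)$ for any $A$. Evaluation contexts $E ::= [\,] \mid \mathbf{let}\ x \Leftarrow E\ \mathbf{in}\ M$; term reduction: $(\lambda x.M)V \longrightarrow_{\mathsf{M}} M\{V/x\}$, $\mathbf{let}\ x \Leftarrow \mathbf{return}\ V\ \mathbf{in}\ M \longrightarrow_{\mathsf{M}} M\{V/x\}$, $E[M_1]\longrightarrow_{\mathsf{M}} E[M_2]$ if $M_1\longrightarrow_{\mathsf{M}} M_2$. Configurations $\mathcal{C},\mathcal{D} ::= \mathcal{C} \parallel \mathcal{D} \mid (\nu a)\mathcal{C} \mid a(\vec V) \mid M$ ($a(\vec V)$ a buffer named $a$ holding $\vec V=V_1\cdot\ldots\cdot V_n$; $\epsilon$ the empty sequence). Configuration contexts $G ::= [\,] \mid G \parallel \mathcal{C} \mid (\nu a)G$. Configuration typing $\Gamma;\Delta\vdash\mathcal{C}$ ($\Delta$ linear): (Par) $\Gamma;\Delta_1\vdash\mathcal{C}_1$, $\Gamma;\Delta_2\vdash\mathcal{C}_2$ give $\Gamma;\Delta_1,\Delta_2\vdash\mathcal{C}_1\parallel\mathcal{C}_2$; (Chan) $\Gamma,a:\mathsf{Chan}(A);\Delta,a:A\vdash\mathcal{C}$ gives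 $\Gamma;\Delta\vdash(\nu a)\mathcal{C}$; (Buf) $\Gamma\vdash V_i:A$ for all $i$ gives $\Gamma;a:A\vdash a(\vec V)$; (Term) $\Gamma\vdash M:\mathbf 1$ gives $\Gamma;\cdot\vdash M$. Structural congruence $\equiv$: least congruence closed under $G[-]$ with commutativity/associativity of $\parallel$ and $\mathcal{C}\parallel(\nu a)\mathcal{D}\equiv(\nu a)(\mathcal{C}\parallel\mathcal{D})$ if $a\notin\mathsf{fv}(\mathcal{C})$. Reduction $\longrightarrow$ (modulo $\equiv$): $E[\mathbf{give}\ W\ a] \parallel a(\vec V) \longrightarrow E[\mathbf{return}\ ()] \parallel a(\vec V \cdot W)$; $E[\mathbf{take}\ a] \parallel a(W\cdot\vec V) \longrightarrow E[\mathbf{return}\ W] \parallel a(\vec V)$; $E[\mathbf{fork}\ M] \longrightarrow E[\mathbf{return}\ ()] \parallel M$; $E[\mathbf{newCh}] \longrightarrow (\nu a)(E[\mathbf{return}\ a] \parallel a(\epsilon))$, $a$ fresh; $G[M_1]\longrightarrow G[M_2]$ if $M_1\longrightarrow_{\mathsf{M}} M_2$; $G[\mathcal{C}_1]\longrightarrow G[\mathcal{C}_2]$ if $\mathcal{C}_1\longrightarrow\mathcal{C}_2$. A configuration $\mathcal{C}'$ is a canonical form of $\mathcal{C}$ if $\mathcal{C}'\equiv\mathcal{C}$ and $\mathcal{C}'$ can be written $(\nu a_1) \ldots (\nu a_n)(M_1 \parallel \ldots \parallel M_m \parallel a_1(\vec V_1) \parallel \ldots \parallel a_n(\vec V_n))$.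 A leaf of a configuration is a subconfiguration without subconfigurations, i.e. a term or a buffer. *)

theory Defs
  imports Main
begin

datatype ty = TUnit | TFun ty ty | TChan ty

text \<open>Variables are de Bruijn indices (binders: lambda and let); names are natural numbers
  (bound only by nu in configurations).\<close>

datatype val = Var nat | Nm nat | Lam comp | UnitV
     and comp = App val val | Let comp comp | Return val | Fork comp
              | Give val val | Take val | NewCh

text \<open>Give V W means give V W: send V along channel W.\<close>

datatype config = Par config config | Nu nat config | Buf nat "val list" | Tm comp

primrec lift_v :: "nat \<Rightarrow> val \<Rightarrow> val" and lift_c :: "nat \<Rightarrow> comp \<Rightarrow> comp" where
  "lift_v k (Var i) = (if i < k then Var i else Var (Suc i))"
| "lift_v k (Nm a) = Nm a"
| "lift_v k (Lam M) = Lam (lift_c (Suc k) M)"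
| "lift_v k UnitV = UnitV"
| "lift_c k (App V W) = App (lift_v k V) (lift_v k W)"
| "lift_c k (Let M N) = Let (lift_c k M) (lift_c (Suc k) N)"
| "lift_c k (Return V) = Return (lift_v k V)"
| "lift_c k (Fork M) = Fork (lift_c k M)"
| "lift_c k (Give V W) = Give (lift_v k V) (lift_v k W)"
| "lift_c k (Take V) = Take (lift_v k V)"
| "lift_c k NewCh = NewCh"

primrec subst_v :: "val \<Rightarrow> nat \<Rightarrow> val \<Rightarrow> val" and subst_c :: "val \<Rightarrow> nat \<Rightarrow> comp \<Rightarrow> comp" where
  "subst_v V k (Var i) = (if i < k then Var i else if i = k then V else Var (i - 1))"
| "subst_v V k (Nm a) = Nm a"
| "subst_v V k (Lam M) = Lam (subst_c (lift_v 0 V) (Suc k) M)"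
| "subst_v V k UnitV = UnitV"
| "subst_c V k (App W U) = App (subst_v V k W) (subst_v V k U)"
| "subst_c V k (Let M N) = Let (subst_c V k M) (subst_c (lift_v 0 V) (Suc k) N)"
| "subst_c V k (Return W) = Return (subst_v V k W)"
| "subst_c V k (Fork M) = Fork (subst_c V k M)"
| "subst_c V k (Give W U) = Give (subst_v V k W) (subst_v V k U)"
| "subst_c V k (Take W) = Take (subst_v V k W)"
| "subst_c V k NewCh = NewCh"

primrec fn_v :: "val \<Rightarrow> nat set" and fn_c :: "comp \<Rightarrow> nat set" where
  "fn_v (Var i) = {}"
| "fn_v (Nm a) = {a}"
| "fn_v (Lam M) = fn_c M"
| "fn_v UnitV = {}"
| "fn_c (App V W) = fn_v V \<union> fn_v W"
| "fn_c (Let M N) = fn_c M \<union> fn_c N"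
| "fn_c (Return V) = fn_v V"
| "fn_c (Fork M) = fn_c M"
| "fn_c (Give V W) = fn_v V \<union> fn_v W"
| "fn_c (Take V) = fn_v V"
| "fn_c NewCh = {}"

primrec fn_cfg :: "config \<Rightarrow> nat set" where
  "fn_cfg (Par C D) = fn_cfg C \<union> fn_cfg D"
| "fn_cfg (Nu a C) = fn_cfg C - {a}"
| "fn_cfg (Buf a Vs) = insert a (\<Union>V\<in>set Vs. fn_v V)"
| "fn_cfg (Tm M) = fn_c M"

text \<open>Typing environments Gamma are split into a variable part (de Bruijn list) and a name part.\<close>

inductive vty :: "ty list \<Rightarrow> (nat \<rightharpoonup> ty) \<Rightarrow> val \<Rightarrow> ty \<Rightarrow> bool"
  and cty :: "ty list \<Rightarrow> (nat \<rightharpoonup> ty) \<Rightarrow> comp \<Rightarrow> ty \<Rightarrow> bool" where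
  T_Var: "i < length \<Gamma>v \<Longrightarrow> \<Gamma>v ! i = A \<Longrightarrow> vty \<Gamma>v \<Gamma>n (Var i) A"
| T_Nm: "\<Gamma>n a = Some A \<Longrightarrow> vty \<Gamma>v \<Gamma>n (Nm a) A"
| T_Lam: "cty (A # \<Gamma>v) \<Gamma>n M B \<Longrightarrow> vty \<Gamma>v \<Gamma>n (Lam M) (TFun A B)"
| T_Unit: "vty \<Gamma>v \<Gamma>n UnitV TUnit"
| T_App: "vty \<Gamma>v \<Gamma>n V (TFun A B) \<Longrightarrow> vty \<Gamma>v \<Gamma>n W A \<Longrightarrow> cty \<Gamma>v \<Gamma>n (App V W) B"
| T_Let: "cty \<Gamma>v \<Gamma>n M A \<Longrightarrow> cty (A # \<Gamma>v) \<Gamma>n N B \<Longrightarrow> cty \<Gamma>v \<Gamma>n (Let M N) B"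
| T_Return: "vty \<Gamma>v \<Gamma>n V A \<Longrightarrow> cty \<Gamma>v \<Gamma>n (Return V) A"
| T_Give: "vty \<Gamma>v \<Gamma>n V A \<Longrightarrow> vty \<Gamma>v \<Gamma>n W (TChan A) \<Longrightarrow> cty \<Gamma>v \<Gamma>n (Give V W) TUnit"
| T_Take: "vty \<Gamma>v \<Gamma>n V (TChan A) \<Longrightarrow> cty \<Gamma>v \<Gamma>n (Take V) A"
| T_Fork: "cty \<Gamma>v \<Gamma>n M TUnit \<Longrightarrow> cty \<Gamma>v \<Gamma>n (Fork M) TUnit"
| T_NewCh: "cty \<Gamma>v \<Gamma>n NewCh (TChan A)"

text \<open>Configuration typing Gamma; Delta |- C. Configurations are closed with respect to
  variables, so Gamma only assigns types to names; Delta is linear (disjoint splitting).\<close>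

inductive cfg_ty :: "(nat \<rightharpoonup> ty) \<Rightarrow> (nat \<rightharpoonup> ty) \<Rightarrow> config \<Rightarrow> bool" where
  T_Par: "cfg_ty \<Gamma> \<Delta>1 C1 \<Longrightarrow> cfg_ty \<Gamma> \<Delta>2 C2 \<Longrightarrow> dom \<Delta>1 \<inter> dom \<Delta>2 = {}
          \<Longrightarrow> cfg_ty \<Gamma> (\<Delta>1 ++ \<Delta>2) (Par C1 C2)"
| T_Chan: "cfg_ty (\<Gamma>(a \<mapsto> TChan A)) (\<Delta>(a \<mapsto> A)) C \<Longrightarrow> a \<notin> dom \<Delta>
          \<Longrightarrow> cfg_ty \<Gamma> \<Delta> (Nu a C)"
| T_Buf: "(\<forall>V\<in>set Vs. vty [] \<Gamma> V A) \<Longrightarrow> cfg_ty \<Gamma> [a \<mapsto> A] (Buf a Vs)"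
| T_Term: "cty [] \<Gamma> M TUnit \<Longrightarrow> cfg_ty \<Gamma> Map.empty (Tm M)"

datatype ectx = EHole | ELet ectx comp

primrec plugE :: "ectx \<Rightarrow> comp \<Rightarrow> comp" where
  "plugE EHole M = M"
| "plugE (ELet E N) M = Let (plugE E M) N"

inductive term_red :: "comp \<Rightarrow> comp \<Rightarrow> bool" where
  TR_Beta: "term_red (App (Lam M) V) (subst_c V 0 M)"
| TR_Let: "term_red (Let (Return V) M) (subst_c V 0 M)"
| TR_Ctx: "term_red M1 M2 \<Longrightarrow> term_red (plugE E M1) (plugE E M2)"

datatype gctx = GHole | GPar gctx config | GNu nat gctx

primrec plugG :: "gctx \<Rightarrow> config \<Rightarrow> config" where
  "plugG GHole C = C"
| "plugG (GPar G D) C = Par (plugG G C) D"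
| "plugG (GNu a G) C = Nu a (plugG G C)"

inductive scong :: "config \<Rightarrow> config \<Rightarrow> bool" where
  SC_refl: "scong C C"
| SC_sym: "scong C D \<Longrightarrow> scong D C"
| SC_trans: "scong C D \<Longrightarrow> scong D E \<Longrightarrow> scong C E"
| SC_ctx: "scong C D \<Longrightarrow> scong (plugG G C) (plugG G D)"
| SC_comm: "scong (Par C D) (Par D C)"
| SC_assoc: "scong (Par (Par C D) E) (Par C (Par D E))"
| SC_extr: "a \<notin> fn_cfg C \<Longrightarrow> scong (Par C (Nu a D)) (Nu a (Par C D))"

inductive red :: "config \<Rightarrow> config \<Rightarrow> bool" where
  R_Give: "red (Par (Tm (plugE E (Give W (Nm a)))) (Buf a Vs))
               (Par (Tm (plugE E (Return UnitV))) (Buf a (Vs @ [W])))"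
| R_Take: "red (Par (Tm (plugE E (Take (Nm a)))) (Buf a (W # Vs)))
               (Par (Tm (plugE E (Return W))) (Buf a Vs))"
| R_Fork: "red (Tm (plugE E (Fork M))) (Par (Tm (plugE E (Return UnitV))) (Tm M))"
| R_NewCh: "a \<notin> fn_c (plugE E NewCh) \<Longrightarrow>
            red (Tm (plugE E NewCh)) (Nu a (Par (Tm (plugE E (Return (Nm a)))) (Buf a [])))"
| R_Term: "term_red M1 M2 \<Longrightarrow> red (plugG G (Tm M1)) (plugG G (Tm M2))"
| R_Ctx: "red C1 C2 \<Longrightarrow> red (plugG G C1) (plugG G C2)"
| R_Cong: "scong C C1 \<Longrightarrow> red C1 C2 \<Longrightarrow> scong C2 D \<Longrightarrow> red C D"

fun par_list :: "config list \<Rightarrow> config" where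
  "par_list [] = undefined"
| "par_list [C] = C"
| "par_list (C # Cs) = Par C (par_list Cs)"

text \<open>canon as Ms Vss = (nu a_1)...(nu a_n)(M_1 || ... || M_m || a_1(V_1) || ... || a_n(V_n)).\<close>
definition canon :: "nat list \<Rightarrow> comp list \<Rightarrow> val list list \<Rightarrow> config" where
  "canon as Ms Vss = foldr Nu as (par_list (map Tm Ms @ map2 Buf as Vss))"

definition is_canonical_form :: "config \<Rightarrow> config \<Rightarrow> nat list \<Rightarrow> comp list \<Rightarrow> val list list \<Rightarrow> bool" where
  "is_canonical_form C' C as Ms Vss \<longleftrightarrow>
     scong C' C \<and> length Vss = length as \<and> map Tm Ms @ map2 Buf as Vss \<noteq> [] \<and>
     C' = canon as Ms Vss"

primrec leaves :: "config \<Rightarrow> config set" where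
  "leaves (Par C D) = leaves C \<union> leaves D"
| "leaves (Nu a C) = leaves C"
| "leaves (Buf a Vs) = {Buf a Vs}"
| "leaves (Tm M) = {Tm M}"

end

theory Submission
  imports Defs
begin

definition chan :: "(nat \<rightharpoonup> ty) \<Rightarrow> bool" where
  "chan G \<longleftrightarrow> (\<forall>a t. G a = Some t \<longrightarrow> (\<exists>A. t = TChan A))"

lemma canon_chan: "vty [] G V (TChan A) \<Longrightarrow> \<exists>a. V = Nm a"
  by (erule vty.cases) auto

lemma canon_fun: "vty [] G V (TFun A B) \<Longrightarrow> chan G \<Longrightarrow> \<exists>M. V = Lam M"
  by (erule vty.cases) (auto simp: chan_def)

definition prog :: "comp \<Rightarrow> bool" where
  "prog M \<longleftrightarrow> (\<exists>V. M = Return V) \<or> (\<exists>M'. term_red M M') \<or> (\<exists>E N. M = plugE E (Fork N))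
     \<or> (\<exists>E. M = plugE E NewCh) \<or> (\<exists>E W a. M = plugE E (Give W (Nm a)))
     \<or> (\<exists>E a. M = plugE E (Take (Nm a)))"

lemma progress: "cty Gv G M A \<Longrightarrow> Gv = [] \<longrightarrow> chan G \<longrightarrow> prog M"
proof (induction rule: vty_cty.inducts(2)[where ?P1.0="\<lambda>_ _ _ _. True"])
  case (T_App Gv G V A B W)
  show ?case proof (intro impI)
    assume "Gv = []" "chan G"
    then obtain M where "V = Lam M" using T_App canon_fun by blast
    then show "prog (App V W)" unfolding prog_def using TR_Beta by blast
  qed
next
  case (T_Let Gv G M A N B)
  show ?case proof (intro impI)
    assume h: "Gv = []" "chan G"
    then have "prog M" using T_Let by blast
    from this[unfolded prog_def] show "prog (comp.Let M N)"
    proof (elim disjE exE)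
      fix V assume "M = Return V" then show ?thesis unfolding prog_def using TR_Let by blast
    next
      fix M' assume "term_red M M'"
      then have "term_red (plugE (ELet EHole N) M) (plugE (ELet EHole N) M')" by (rule TR_Ctx)
      then show ?thesis unfolding prog_def by auto
    next
      fix E N' assume "M = plugE E (Fork N')"
      then have "comp.Let M N = plugE (ELet E N) (Fork N')" by simp
      then show ?thesis unfolding prog_def by blast
    next
      fix E assume "M = plugE E NewCh"
      then have "comp.Let M N = plugE (ELet E N) NewCh" by simp
      then show ?thesis unfolding prog_def by blast
    next
      fix E W a assume "M = plugE E (Give W (Nm a))"
      then have "comp.Let M N = plugE (ELet E N) (Give W (Nm a))" by simp
      then show ?thesis unfolding prog_def by blast
    next
      fix E a assume "M = plugE E (Take (Nm a))"
      then have "comp.Let M N = plugE (ELet E N) (Take (Nm a))" by simp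
      then show ?thesis unfolding prog_def by blast
    qed
  qed
next
  case (T_Return Gv G V A) then show ?case unfolding prog_def by blast
next
  case (T_Give Gv G V A W)
  show ?case proof (intro impI)
    assume "Gv = []" "chan G"
    then obtain a where "W = Nm a" using T_Give canon_chan by blast
    then have "Give V W = plugE EHole (Give V (Nm a))" by simp
    then show "prog (Give V W)" unfolding prog_def by blast
  qed
next
  case (T_Take Gv G V A)
  show ?case proof (intro impI)
    assume "Gv = []" "chan G"
    then obtain a where "V = Nm a" using T_Take canon_chan by blast
    then have "Take V = plugE EHole (Take (Nm a))" by simp
    then show "prog (Take V)" unfolding prog_def by blast
  qed
next
  case (T_Fork Gv G M)
  have "Fork M = plugE EHole (Fork M)" by simp
  then show ?case unfolding prog_def by blast
next
  case (T_NewCh Gv G A)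
  have "NewCh = plugE EHole NewCh" by simp
  then show ?case unfolding prog_def by blast
qed auto

lemma fn_ty: "vty Gv G V A \<Longrightarrow> fn_v V \<subseteq> dom G" "cty Gv G M B \<Longrightarrow> fn_c M \<subseteq> dom G"
  by (induction rule: vty_cty.inducts) auto

lemma fn_cfg_ty: "cfg_ty G D C \<Longrightarrow> fn_cfg C \<subseteq> dom G \<union> dom D"
proof (induction rule: cfg_ty.induct)
  case (T_Buf Vs G A a) then show ?case using fn_ty(1) by fastforce
next
  case (T_Term G M) then show ?case using fn_ty(2) by auto
qed auto

lemma leaf_ty: "cfg_ty G D C \<Longrightarrow> chan G \<Longrightarrow> Tm M \<in> leaves C \<Longrightarrow> \<exists>G'. cty [] G' M TUnit \<and> chan G'"
proof (induction rule: cfg_ty.induct)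
  case (T_Chan G a A D C)
  have "chan (G(a \<mapsto> TChan A))" using T_Chan.prems(1) by (auto simp: chan_def)
  from T_Chan.IH[OF this] T_Chan.prems(2) show ?case by simp
qed auto

lemma fin_fn: "finite (fn_v V)" "finite (fn_c M)"
  by (induction V and M) auto

lemma plugG_leaves: "leaves C = leaves D \<Longrightarrow> leaves (plugG G C) = leaves (plugG G D)"
  by (induction G) simp_all
lemma plugG_fn: "fn_cfg C = fn_cfg D \<Longrightarrow> fn_cfg (plugG G C) = fn_cfg (plugG G D)"
  by (induction G) simp_all

lemma scong_leaves: "scong C D \<Longrightarrow> leaves C = leaves D"
proof (induction rule: scong.induct)
  case (SC_ctx C D G) then show ?case using plugG_leaves by blast
next
  case (SC_comm C D) then show ?case by (simp add: Un_commute)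
next
  case (SC_assoc C D E) then show ?case by (simp add: Un_assoc)
qed simp_all

lemma scong_fn: "scong C D \<Longrightarrow> fn_cfg C = fn_cfg D"
proof (induction rule: scong.induct)
  case (SC_ctx C D G) then show ?case using plugG_fn by blast
next
  case (SC_comm C D) then show ?case by (simp add: Un_commute)
next
  case (SC_assoc C D E) then show ?case by (simp add: Un_assoc)
next
  case (SC_extr a C D) then show ?case by auto
qed simp_all

lemma scong_inv: "scong C D \<Longrightarrow> leaves C = leaves D \<and> fn_cfg C = fn_cfg D"
  using scong_leaves scong_fn by blast

lemma par_list_leaves: "L \<noteq> [] \<Longrightarrow> leaves (par_list L) = (\<Union>X\<in>set L. leaves X)"
  by (induction L rule: par_list.induct) auto
lemma par_list_fn: "L \<noteq> [] \<Longrightarrow> fn_cfg (par_list L) = (\<Union>X\<in>set L. fn_cfg X)"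
  by (induction L rule: par_list.induct) auto
lemma foldr_leaves: "leaves (foldr Nu as X) = leaves X"
  by (induction as) auto
lemma foldr_fn: "fn_cfg (foldr Nu as X) = fn_cfg X - set as"
  by (induction as) auto
lemma foldr_red: "red X Y \<Longrightarrow> red (foldr Nu as X) (foldr Nu as Y)"
proof (induction as)
  case (Cons a as)
  then show ?case using R_Ctx[of "foldr Nu as X" "foldr Nu as Y" "GNu a GHole"] by simp
qed simp

lemma scong_parR: "scong A B \<Longrightarrow> scong (Par y A) (Par y B)"
proof -
  assume "scong A B"
  then have "scong (Par A y) (Par B y)" using SC_ctx[of A B "GPar GHole y"] by simp
  then show ?thesis by (rule SC_trans[OF SC_trans[OF SC_comm] SC_comm])
qed

lemma move_front: "x \<in> set xs \<Longrightarrow> \<exists>ys. set xs = insert x (set ys) \<and> scong (par_list xs) (par_list (x#ys))"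
proof (induction xs)
  case Nil then show ?case by simp
next
  case (Cons y xs')
  show ?case
  proof (cases "x = y")
    case True then show ?thesis by (intro exI[of _ xs']) (auto intro: SC_refl)
  next
    case False
    then have xin: "x \<in> set xs'" using Cons by simp
    then have ne: "xs' \<noteq> []" by auto
    obtain ys' where ys': "set xs' = insert x (set ys')" "scong (par_list xs') (par_list (x#ys'))"
      using Cons.IH xin by blast
    have e1: "par_list (y#xs') = Par y (par_list xs')" using ne by (cases xs') auto
    have s1: "scong (par_list (y#xs')) (Par y (par_list (x#ys')))" using e1 scong_parR ys'(2) by simp
    show ?thesis
    proof (cases "ys' = []")
      case True
      then have "scong (par_list (y#xs')) (Par y x)" using s1 by simp
      then have "scong (par_list (y#xs')) (par_list [x,y])" using SC_trans[OF _ SC_comm] by simp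
      then show ?thesis using ys'(1) True by (intro exI[of _ "[y]"]) auto
    next
      case nf: False
      have e2: "par_list (x#ys') = Par x (par_list ys')" using nf by (cases ys') auto
      define R where "R = par_list ys'"
      have a: "scong (Par y (Par x R)) (Par (Par y x) R)" by (rule SC_sym, rule SC_assoc)
      have b: "scong (Par (Par y x) R) (Par (Par x y) R)"
        using SC_ctx[OF SC_comm, of "GPar GHole R"] by simp
      have c: "scong (Par (Par x y) R) (Par x (Par y R))" by (rule SC_assoc)
      have e3: "par_list (x#y#ys') = Par x (Par y R)" using nf R_def by (cases ys') auto
      have s1': "scong (par_list (y#xs')) (Par y (Par x R))" using s1 e2 R_def by simp
      have "scong (par_list (y#xs')) (par_list (x#y#ys'))"
        unfolding e3 by (rule SC_trans[OF SC_trans[OF SC_trans[OF s1' a] b] c])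
      then show ?thesis using ys'(1) by (intro exI[of _ "y#ys'"]) auto
    qed
  qed
qed

lemma red_single: "P \<in> set L \<Longrightarrow> red P X \<Longrightarrow> \<exists>Y. red (par_list L) Y"
proof -
  assume "P \<in> set L" "red P X"
  then obtain ys where ys: "scong (par_list L) (par_list (P#ys))" using move_front by blast
  have "\<exists>Y. red (par_list (P#ys)) Y"
  proof (cases ys)
    case Nil then show ?thesis using \<open>red P X\<close> by auto
  next
    case (Cons z zs)
    then show ?thesis using R_Ctx[OF \<open>red P X\<close>, of "GPar GHole (par_list ys)"] by auto
  qed
  then obtain Y where "red (par_list (P#ys)) Y" by blast
  then have "red (par_list L) Y" by (rule R_Cong[OF ys _ SC_refl])
  then show ?thesis by blast
qed

lemma red_pair: "P \<in> set L \<Longrightarrow> Q \<in> set L \<Longrightarrow> P \<noteq> Q \<Longrightarrow> red (Par P Q) X \<Longrightarrow> \<exists>Y. red (par_list L) Y"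
proof -
  assume h: "P \<in> set L" "Q \<in> set L" "P \<noteq> Q" "red (Par P Q) X"
  then obtain ys where ys: "set L = insert P (set ys)" "scong (par_list L) (par_list (P#ys))"
    using move_front by blast
  then have "Q \<in> set ys" using h by auto
  then obtain zs where zs: "scong (par_list ys) (par_list (Q#zs))" using move_front by blast
  have ne: "ys \<noteq> []" using \<open>Q \<in> set ys\<close> by auto
  have e1: "par_list (P#ys) = Par P (par_list ys)" using ne by (cases ys) auto
  have s: "scong (par_list L) (Par P (par_list (Q#zs)))"
    using SC_trans[OF ys(2)[unfolded e1] scong_parR[OF zs]] .
  show ?thesis
  proof (cases zs)
    case Nil
    then have s0: "scong (par_list L) (Par P Q)" using s by simp
    have "red (par_list L) X" by (rule R_Cong[OF s0 h(4) SC_refl])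
    then show ?thesis by blast
  next
    case (Cons z zs')
    define R where "R = par_list zs"
    have "par_list (Q#zs) = Par Q R" using Cons R_def by simp
    then have s': "scong (par_list L) (Par P (Par Q R))" using s by simp
    have s2: "scong (par_list L) (Par (Par P Q) R)" using SC_trans[OF s' SC_sym[OF SC_assoc]] .
    have "red (Par (Par P Q) R) (Par X R)" using R_Ctx[OF h(4), of "GPar GHole R"] by simp
    then have "red (par_list L) (Par X R)" by (rule R_Cong[OF s2 _ SC_refl])
    then show ?thesis by blast
  qed
qed

theorem theorem8:
  assumes "cfg_ty Map.empty Map.empty C"
    and "\<not> (\<exists>C''. red C C'')"
    and "is_canonical_form C' C as Ms Vss"
  shows "\<forall>L \<in> leaves C.
           (\<exists>i < length as. L = Buf (as ! i) (Vss ! i))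
         \<or> (\<exists>V. L = Tm (Return V))
         \<or> (\<exists>E i. i < length as \<and> Vss ! i = [] \<and> L = Tm (plugE E (Take (Nm (as ! i)))))"
proof
  fix L assume LC: "L \<in> leaves C"
  define Ls where "Ls = map Tm Ms @ map2 Buf as Vss"
  have sc: "scong C' C" and len: "length Vss = length as" and ne: "Ls \<noteq> []"
    and C'd: "C' = foldr Nu as (par_list Ls)"
    using assms(3) unfolding is_canonical_form_def canon_def Ls_def by auto
  have inv: "leaves C' = leaves C" "fn_cfg C' = fn_cfg C" using scong_inv[OF sc] by auto
  have fnC: "fn_cfg C = {}" using fn_cfg_ty[OF assms(1)] by simp
  have fnL: "(\<Union>X\<in>set Ls. fn_cfg X) \<subseteq> set as"
  proof -
    have "fn_cfg C' = fn_cfg (par_list Ls) - set as" unfolding C'd by (rule foldr_fn)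
    then have "fn_cfg (par_list Ls) - set as = {}" using inv(2) fnC by simp
    then show ?thesis unfolding par_list_fn[OF ne] by blast
  qed
  have noredL: "\<not> (\<exists>Y. red (par_list Ls) Y)"
  proof
    assume "\<exists>Y. red (par_list Ls) Y"
    then obtain Y where "red (par_list Ls) Y" by blast
    then have "red C' (foldr Nu as Y)" using C'd foldr_red by simp
    then have "red C (foldr Nu as Y)" by (rule R_Cong[OF SC_sym[OF sc] _ SC_refl])
    then show False using assms(2) by blast
  qed
  have bufidx: "\<exists>i < length as. as ! i = a" if "a \<in> set as" for a
    using that unfolding in_set_conv_nth by blast
  have bufin: "Buf (as ! i) (Vss ! i) \<in> set Ls" if "i < length as" for i
  proof -
    have "zip as Vss ! i \<in> set (zip as Vss)" using that len by (intro nth_mem) simp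
    then have "(as ! i, Vss ! i) \<in> set (zip as Vss)" using that len by simp
    then have "case_prod Buf (as ! i, Vss ! i) \<in> set (map2 Buf as Vss)"
      unfolding set_map by (rule imageI)
    then show ?thesis unfolding Ls_def by simp
  qed
  have "leaves C' = leaves (par_list Ls)" unfolding C'd by (rule foldr_leaves)
  then have "L \<in> leaves (par_list Ls)" using inv(1) LC by simp
  then have "L \<in> (\<Union>X\<in>set Ls. leaves X)" unfolding par_list_leaves[OF ne] .
  then obtain X where X: "X \<in> set Ls" "L \<in> leaves X" by blast
  show "(\<exists>i < length as. L = Buf (as ! i) (Vss ! i))
         \<or> (\<exists>V. L = Tm (Return V))
         \<or> (\<exists>E i. i < length as \<and> Vss ! i = [] \<and> L = Tm (plugE E (Take (Nm (as ! i)))))"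
  proof (cases "X \<in> set (map2 Buf as Vss)")
    case True
    then obtain a Vs where "(a, Vs) \<in> set (zip as Vss)" "X = Buf a Vs" by auto
    then obtain i where "i < length (zip as Vss)" "zip as Vss ! i = (a, Vs)" unfolding in_set_conv_nth by blast
    then have "i < length as" "X = Buf (as ! i) (Vss ! i)" using len \<open>X = Buf a Vs\<close> by auto
    then show ?thesis using X by auto
  next
    case False
    have "X \<in> set (map Tm Ms)" using X(1) False unfolding Ls_def by simp
    then obtain M where M: "M \<in> set Ms" "X = Tm M" by auto
    then have LM: "L = Tm M" using X by simp
    have ch0: "chan Map.empty" by (simp add: chan_def)
    obtain G where G: "cty [] G M TUnit" "chan G"
      using leaf_ty[OF assms(1) ch0 LC[unfolded LM]] by blast
    have "fn_cfg (Tm M) \<subseteq> set as" using fnL X(1) M(2) by blast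
    then have fnM: "fn_c M \<subseteq> set as" by simp
    have nored: "\<not> red (Tm M) Y" for Y using red_single[OF X(1)[unfolded M(2)]] noredL by blast
    have "prog M" using progress[OF G(1)] G(2) by simp
    then show ?thesis unfolding prog_def
    proof (elim disjE exE)
      fix V assume "M = Return V" then show ?thesis using LM by blast
    next
      fix M' assume "term_red M M'"
      then have "red (Tm M) (Tm M')" using R_Term[of M M' GHole] by simp
      with nored show ?thesis by blast
    next
      fix E N assume e: "M = plugE E (Fork N)"
      have "red (Tm M) (Par (Tm (plugE E (Return UnitV))) (Tm N))" unfolding e by (rule R_Fork)
      with nored show ?thesis by blast
    next
      fix E assume e: "M = plugE E NewCh"
      obtain a where "a \<notin> fn_c (plugE E NewCh)"
        using ex_new_if_finite[OF infinite_UNIV_nat fin_fn(2)] by blast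
      then have "red (Tm M) (Nu a (Par (Tm (plugE E (Return (Nm a)))) (Buf a [])))" unfolding e by (rule R_NewCh)
      with nored show ?thesis by blast
    next
      fix E W a assume e: "M = plugE E (Give W (Nm a))"
      then have "a \<in> set as" using fnM by (induction E arbitrary: M) auto
      then obtain i where i: "i < length as" "as ! i = a" using bufidx by blast
      have "red (Par (Tm M) (Buf (as ! i) (Vss ! i))) (Par (Tm (plugE E (Return UnitV))) (Buf a ((Vss ! i) @ [W])))"
        unfolding e i(2) by (rule R_Give)
      then have "\<exists>Y. red (par_list Ls) Y" by (rule red_pair[OF X(1)[unfolded M(2)] bufin[OF i(1)], rotated]) simp
      with noredL show ?thesis by blast
    next
      fix E a assume e: "M = plugE E (Take (Nm a))"
      then have "a \<in> set as" using fnM by (induction E arbitrary: M) auto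
      then obtain i where i: "i < length as" "as ! i = a" using bufidx by blast
      show ?thesis
      proof (cases "Vss ! i")
        case Nil
        have "L = Tm (plugE E (Take (Nm (as ! i))))" using LM e i(2) by simp
        then show ?thesis using i(1) Nil by blast
      next
        case (Cons W Ws)
        have "red (Par (Tm M) (Buf (as ! i) (Vss ! i))) (Par (Tm (plugE E (Return W))) (Buf a Ws))"
          unfolding e i(2) Cons by (rule R_Take)
        then have "\<exists>Y. red (par_list Ls) Y" by (rule red_pair[OF X(1)[unfolded M(2)] bufin[OF i(1)], rotated]) simp
      with noredL show ?thesis by blast
      qed
    qed
  qed
qed

end
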